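(* Let $d=2n$ be even, $\omega=e^{2\pi i/d}$, and $F_d=(\omega^{jk})_{j,k=0}^{d-1}$ the Fourier matrix. For $\vec\xi=(\xi_1,\dots,\xi_{n-1})\in\mathbb{R}^{n-1}$ define the real $d\times d$ matrix $R(\vec\xi)$ by $R(\vec\xi)_{j,k}=0$ if $j$ is even, $R(\vec\xi)_{j,k}=0$ if $j$ is odd and $k\equiv0\pmod n$, and $R(\vec\xi)_{j,k}=\xi_{(k \bmod n)}$ otherwise (where $k\bmod n\in\{1,\dots,n-1\}$). Then for every $\vec\xi$ both $F_d\circ\exp(iR(\vec\xi))$ and $F_d\circ\exp(iR(\vec\xi)^t)$ are complex Hadamard matrices.
   Context: A $d\times d$ complex Hadamard matrix has unimodular entries and pairwise orthogonal columns. $\circ$ denotes the entrywise product and $\exp(iR)$ the entrywise exponential $(\exp(iR))_{jk}=e^{iR_{jk}}$; rows and columns are indexed $0,\dots,d-1$. *)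

theory Defs
  imports Complex_Main
begin

text \<open>A d x d complex matrix is represented as a function nat => nat => complex,
  only entries with indices in {0..<d} being relevant.\<close>

definition complex_hadamard :: "nat \<Rightarrow> (nat \<Rightarrow> nat \<Rightarrow> complex) \<Rightarrow> bool" where
  "complex_hadamard d H \<longleftrightarrow>
     (\<forall>j<d. \<forall>k<d. cmod (H j k) = 1) \<and>
     (\<forall>k<d. \<forall>l<d. k \<noteq> l \<longrightarrow> (\<Sum>j<d. H j k * cnj (H j l)) = 0)"

definition fourier :: "nat \<Rightarrow> nat \<Rightarrow> nat \<Rightarrow> complex" where
  "fourier d j k = exp (2 * of_real pi * \<i> / of_nat d) ^ (j * k)"

definition had_prod :: "(nat \<Rightarrow> nat \<Rightarrow> complex) \<Rightarrow> (nat \<Rightarrow> nat \<Rightarrow> complex) \<Rightarrow> nat \<Rightarrow> nat \<Rightarrow> complex" where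
  "had_prod A B j k = A j k * B j k"

definition exp_i :: "(nat \<Rightarrow> nat \<Rightarrow> real) \<Rightarrow> nat \<Rightarrow> nat \<Rightarrow> complex" where
  "exp_i R j k = exp (\<i> * of_real (R j k))"

definition mat_transpose :: "(nat \<Rightarrow> nat \<Rightarrow> 'a) \<Rightarrow> nat \<Rightarrow> nat \<Rightarrow> 'a" where
  "mat_transpose R j k = R k j"

text \<open>The real d x d matrix R(xi), d = 2n; xi is indexed by 1..n-1 (other values unused).\<close>
definition Rxi :: "nat \<Rightarrow> (nat \<Rightarrow> real) \<Rightarrow> nat \<Rightarrow> nat \<Rightarrow> real" where
  "Rxi n \<xi> j k = (if even j then 0 else if k mod n = 0 then 0 else \<xi> (k mod n))"

end

theory Submission imports Defs begin
lemma fourier_eq: "n > 0 \<Longrightarrow> fourier (2*n) j k = cis (pi / real n) ^ (j*k)"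
proof -
  assume n: "n > 0"
  have "2 * complex_of_real pi * \<i> / of_nat (2*n) = \<i> * complex_of_real (pi / real n)"
    using n by (simp add: field_simps)
  thus ?thesis by (simp only: fourier_def cis_conv_exp)
qed
lemma wpow: "cis x ^ t = cis (real t * x)" by (simp add: DeMoivre)
lemma wn: "n > 0 \<Longrightarrow> cis (pi / real n) ^ n = -1" by (simp add: DeMoivre)
lemma wroot: assumes n: "n > 0" and h: "cis (pi / real n) ^ t = 1" shows "2*n dvd t"
proof -
  have "cos (real t * (pi / real n)) = 1" using h by (metis DeMoivre complex.sel(1) one_complex.sel(1) cis.sel(1))
  then obtain m :: int where m: "real t * (pi / real n) = real_of_int m * 2 * pi" by (auto simp: cos_one_2pi_int)
  hence "real t = real_of_int m * 2 * real n" using n by (simp add: field_simps)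
  hence "real_of_int (int t) = real_of_int (m * (2 * int n))" by simp
  hence "int t = m * (2 * int n)" using of_int_eq_iff by blast
  hence "int (2*n) dvd int t" by simp
  thus ?thesis by presburger
qed
lemma split2: "(\<Sum>j<m+(p::nat). f j) = (\<Sum>j<m. f j) + (\<Sum>j<p. f (m+j))"
  by (induction p) (auto simp: add.assoc)
lemma norm_w: "cmod (cis x ^ t * cis y) = 1" by (simp add: norm_mult norm_power)
lemma cnj_w: assumes n: "n>0" "l \<le> 2*n" shows "cnj (cis (pi / real n) ^ (j*l)) = cis (pi / real n) ^ (j*(2*n-l))"
proof -
  have "cnj (cis (pi / real n) ^ (j*l)) = cis (- (real (j*l) * (pi / real n)))" by (simp add: DeMoivre cis_cnj)
  also have "\<dots> = cis (- (real (j*l) * (pi / real n))) * cis (pi / real n) ^ (2*n*j)"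
  proof -
    have "cis (pi / real n) ^ (2*n*j) = (cis (pi / real n) ^ n) ^ (2*j)" by (simp add: power_mult[symmetric] mult_ac)
    thus ?thesis using wn[OF n(1)] by simp
  qed
  also have "\<dots> = cis (pi / real n) ^ (j*(2*n-l))"
    using n by (simp add: DeMoivre cis_mult) (simp add: algebra_simps of_nat_diff diff_divide_distrib)
  finally show ?thesis .
qed

lemma entry: "n > 0 \<Longrightarrow> had_prod (fourier (2*n)) (exp_i R) j k = cis (pi / real n) ^ (j*k) * cis (R j k)"
  by (simp add: had_prod_def exp_i_def fourier_eq cis_conv_exp)

lemma summand:
  assumes n: "n > 0" "l < 2*n"
  shows "had_prod (fourier (2*n)) (exp_i R) j k * cnj (had_prod (fourier (2*n)) (exp_i R) j l)
     = (cis (pi / real n) ^ (k + (2*n - l))) ^ j * cis (R j k - R j l)"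
proof -
  let ?w = "cis (pi / real n)"
  have "had_prod (fourier (2*n)) (exp_i R) j k * cnj (had_prod (fourier (2*n)) (exp_i R) j l)
     = ?w ^ (j*k) * cis (R j k) * (?w ^ (j*(2*n-l)) * cis (- R j l))"
    using n cnj_w[OF n(1), of l j] by (simp only: entry[OF n(1)] complex_cnj_mult cis_cnj less_imp_le)
  also have "\<dots> = (?w ^ (j*k) * ?w ^ (j*(2*n-l))) * (cis (R j k) * cis (- R j l))" by (simp add: mult_ac)
  also have "\<dots> = (?w ^ (k + (2*n - l))) ^ j * cis (R j k - R j l)"
    by (simp add: power_add[symmetric] power_mult[symmetric] cis_mult algebra_simps)
  finally show ?thesis .
qed

lemma split_eo: "(\<Sum>i<2*(n::nat). if even i then f i else g i) = (\<Sum>i<n. f (2*i)) + (\<Sum>i<n. (g (2*i+1) :: 'a::comm_monoid_add))"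
  by (induction n) (simp_all add: add_ac)

lemma geo0: assumes "z \<noteq> 1" "z ^ m = 1" shows "(\<Sum>j<m. z ^ j) = (0::complex)"
  using assms by (simp add: geometric_sum)

lemma part1:
  assumes n: "n > 0" and k: "k < 2*n" and l: "l < 2*n" and kl: "k \<noteq> l"
  shows "(\<Sum>j<2*n. had_prod (fourier (2*n)) (exp_i (Rxi n \<xi>)) j k * cnj (had_prod (fourier (2*n)) (exp_i (Rxi n \<xi>)) j l)) = 0"
proof -
  let ?w = "cis (pi / real n)"
  define t where "t = k + (2*n - l)"
  define A where "A = (\<lambda>k. if k mod n = 0 then 0 else \<xi> (k mod n))"
  define u where "u = ?w ^ t"
  define e where "e = cis (A k - A l)"
  have R: "Rxi n \<xi> j k - Rxi n \<xi> j l = (if even j then 0 else A k - A l)" for j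
    by (simp add: Rxi_def A_def)
  have "(\<Sum>j<2*n. had_prod (fourier (2*n)) (exp_i (Rxi n \<xi>)) j k * cnj (had_prod (fourier (2*n)) (exp_i (Rxi n \<xi>)) j l))
     = (\<Sum>j<2*n. if even j then u ^ j else u ^ j * e)"
    using n l by (intro sum.cong) (auto simp: summand R u_def e_def t_def)
  also have "\<dots> = (\<Sum>i<n. u ^ (2*i)) + (\<Sum>i<n. u ^ (2*i+1) * e)" by (rule split_eo)
  also have "\<dots> = (1 + u * e) * (\<Sum>i<n. (u^2) ^ i)"
  proof -
    have "u ^ (2*i) = (u^2)^i" "u^(2*i+1) * e = u * e * (u^2)^i" for i
      by (simp_all add: power_mult mult_ac flip: power_mult_distrib) (simp_all add: power_mult[symmetric] mult.commute)
    thus ?thesis by (simp add: sum_distrib_left sum_distrib_right distrib_right sum.distrib mult_ac)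
  qed
  also have "\<dots> = 0"
  proof (cases "n dvd t")
    case True
    then obtain q where q: "t = n * q" by auto
    have "0 < t" "t < 4*n" "t \<noteq> 2*n" using k l kl unfolding t_def by auto
    hence "q = 1 \<or> q = 3" using q n by (cases q; cases "q - 1"; cases "q - 2"; cases "q-3"; auto)
    hence "u = -1" using wn[OF n] q unfolding u_def by (auto simp: power_mult)
    moreover have "A k = A l"
    proof -
      have "l = k + n \<or> k = l + n" using \<open>q = 1 \<or> q = 3\<close> q k l unfolding t_def
        by auto
      hence "k mod n = l mod n" by auto
      thus ?thesis unfolding A_def by simp
    qed
    ultimately show ?thesis unfolding e_def by simp
  next
    case False
    have "u^2 \<noteq> 1"
    proof
      assume "u^2 = 1"
      hence "?w ^ (t*2) = 1" unfolding u_def by (simp add: power_mult)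
      from wroot[OF n this] have "2*n dvd t*2" .
      thus False using False by auto
    qed
    moreover have "(u^2)^n = 1" unfolding u_def
    proof -
      have "((?w ^ t)^2)^n = (?w ^ n) ^ (2*t)" by (simp add: power_mult[symmetric] mult_ac)
      thus "((?w ^ t)^2)^n = 1" using wn[OF n] by simp
    qed
    ultimately show ?thesis by (simp add: geo0)
  qed
  finally show ?thesis .
qed

lemma part2:
  assumes n: "n > 0" and k: "k < 2*n" and l: "l < 2*n" and kl: "k \<noteq> l"
  shows "(\<Sum>j<2*n. had_prod (fourier (2*n)) (exp_i (mat_transpose (Rxi n \<xi>))) j k * cnj (had_prod (fourier (2*n)) (exp_i (mat_transpose (Rxi n \<xi>))) j l)) = 0"
proof -
  let ?w = "cis (pi / real n)"
  define t where "t = k + (2*n - l)"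
  define A where "A = (\<lambda>k. if k mod n = 0 then 0 else \<xi> (k mod n))"
  define c :: real where "c = (if even k then 0 else 1) - (if even l then 0 else 1)"
  define u where "u = ?w ^ t"
  have R: "mat_transpose (Rxi n \<xi>) j k - mat_transpose (Rxi n \<xi>) j l = c * A j" for j
    by (simp add: Rxi_def A_def mat_transpose_def c_def)
  have "(\<Sum>j<2*n. had_prod (fourier (2*n)) (exp_i (mat_transpose (Rxi n \<xi>))) j k * cnj (had_prod (fourier (2*n)) (exp_i (mat_transpose (Rxi n \<xi>))) j l))
     = (\<Sum>j<2*n. u ^ j * cis (c * A j))"
    using n l by (intro sum.cong) (auto simp: summand R u_def t_def)
  also have "\<dots> = 0"
  proof (cases "even k = even l")
    case True
    hence "c = 0" unfolding c_def by auto
    have "u \<noteq> 1"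
    proof
      assume "u = 1"
      from wroot[OF n this[unfolded u_def]] have "2*n dvd t" .
      moreover have "0 < t" "t < 4*n" "t \<noteq> 2*n" using k l kl unfolding t_def by auto
      ultimately show False by (auto elim!: dvdE)
    qed
    moreover have "u ^ (2*n) = 1" unfolding u_def
    proof -
      have "(?w ^ t) ^ (2*n) = (?w ^ n) ^ (2*t)" by (simp add: power_mult[symmetric] mult_ac)
      thus "(?w ^ t) ^ (2*n) = 1" using wn[OF n] by simp
    qed
    ultimately show ?thesis using \<open>c = 0\<close> by (simp add: geo0)
  next
    case False
    hence "odd t" using k l unfolding t_def by auto
    have "u ^ n = -1"
    proof -
      have "u ^ n = (?w ^ n) ^ t" unfolding u_def by (simp add: power_mult[symmetric] mult_ac)
      thus ?thesis using wn[OF n] \<open>odd t\<close> by simp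
    qed
    have "(\<Sum>j<2*n. u ^ j * cis (c * A j)) = (\<Sum>j<n+n. u ^ j * cis (c * A j))" by (simp add: mult_2)
    also have "\<dots> = (\<Sum>j<n. u ^ j * cis (c * A j)) + (\<Sum>j<n. u ^ (n+j) * cis (c * A (n+j)))"
      by (rule split2)
    also have "(\<Sum>j<n. u ^ (n+j) * cis (c * A (n+j))) = - (\<Sum>j<n. u ^ j * cis (c * A j))"
    proof -
      have "A (n+j) = A j" for j unfolding A_def by simp
      thus ?thesis using \<open>u ^ n = -1\<close> by (simp add: power_add sum_negf)
    qed
    finally show ?thesis by simp
  qed
  finally show ?thesis .
qed

theorem mainTheorem10:
  fixes n :: nat and \<xi> :: "nat \<Rightarrow> real"
  shows "complex_hadamard (2 * n) (had_prod (fourier (2 * n)) (exp_i (Rxi n \<xi>)))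
       \<and> complex_hadamard (2 * n) (had_prod (fourier (2 * n)) (exp_i (mat_transpose (Rxi n \<xi>))))"
proof (cases "n = 0")
  case True
  thus ?thesis by (simp add: complex_hadamard_def)
next
  case False
  hence n: "n > 0" by simp
  show ?thesis unfolding complex_hadamard_def
    using part1[OF n] part2[OF n] by (simp add: entry[OF n] norm_mult norm_power)
qed
end
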